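(* Let $\Lambda>0$, let $a_\Lambda\in\mathbb R$, and let $\rho\in C_c^\infty(\mathbb R^3)$ be real-valued and identically equal to $1$ on some ball $B(0,R)$, $R>0$. For $c>0$ let $\nu_{c,\rho,\Lambda}$ be the probability measure $$\nu_{c,\rho,\Lambda}(d\Phi)=\frac1{Z}\,e^{-c\|\rho\Phi_\Lambda\|^4_{L^4(\mathbb R^3)}-c\,a_\Lambda\|\rho\Phi_\Lambda\|^2_{L^2(\mathbb R^3)}}\,\mu_{\mathrm{GFF}}(d\Phi),\qquad \Phi_\Lambda=\Pi_\Lambda\Phi,$$ with $Z$ the normalizing constant. Then for $c>0$ small enough (depending on $\Lambda$, $\rho$, $a_\Lambda$) there exists $f\in L^2(\mathbb R^3)$ with $\mathrm{supp}(f)\subset\{x_1>0\}$ such that $$\mathbb E_{\nu_{c,\rho,\Lambda}}\Big[\overline{(\rho\Pi_\Lambda\Phi)(\Theta f)}\,(\rho\Pi_\Lambda\Phi)(f)\Big]<0.$$ Consequently, for such $c$ the measure $\nu_{c,\rho,\Lambda}$ is not reflection positive.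
   Context: $\mu_{\mathrm{GFF}}$ is the law of the massive Gaussian free field on $\mathbb R^3$, the centered Gaussian random distribution with covariance $\mathbb E[\Phi(f)\Phi(h)]=\langle f,(\Delta+1)^{-1}h\rangle_{L^2}$, $\Delta$ the positive Laplacian. $\Pi_\Lambda=\mathbbm 1_{[0,\Lambda^2]}(\Delta)$ is the Fourier multiplier by $\mathbbm 1_{\{|\xi|\le\Lambda\}}$, so $\Phi_\Lambda$ is a random smooth function. For $f\in L^2(\mathbb R^3)$, $(\rho\Pi_\Lambda\Phi)(f)=\int_{\mathbb R^3}f(x)\rho(x)(\Pi_\Lambda\Phi)(x)\,dx$. $\Theta(x_1,x_2,x_3)=(-x_1,x_2,x_3)$ and $\Theta f=f\circ\Theta$. Reflection positivity of the measure refers to the field $\rho\Pi_\Lambda\Phi$ under $\nu_{c,\rho,\Lambda}$: for observables $F$ depending on this field tested against functions supported in $\{x_1\ge 0\}$, $\mathbb E[\overline{\Theta F}F]\ge 0$, where $(\Theta F)(\omega)=F(\omega\circ\Theta)$. *)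

theory Defs
  imports "HOL-Analysis.Analysis" "HOL-Probability.Probability"
begin

type_synonym pt = "real^3"

fun pderivs :: "3 list \<Rightarrow> (pt \<Rightarrow> real) \<Rightarrow> pt \<Rightarrow> real" where
  "pderivs [] f = f"
| "pderivs (i # is) f = (\<lambda>x. frechet_derivative (pderivs is f) (at x) (axis i 1))"

definition smooth_fun :: "(pt \<Rightarrow> real) \<Rightarrow> bool" where
  "smooth_fun f \<longleftrightarrow> (\<forall>is. \<forall>x. pderivs is f differentiable (at x))"

definition compact_support :: "(pt \<Rightarrow> real) \<Rightarrow> bool" where
  "compact_support f \<longleftrightarrow> compact (closure {x. f x \<noteq> 0})"

definition Theta :: "pt \<Rightarrow> pt" where
  "Theta x = (\<chi> i. if i = 1 then - (x $ i) else x $ i)"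

text \<open>Covariance kernel of Pi_Lambda Phi, Phi the massive GFF on R^3:
  C(x,y) = (2 pi)^(-3) int_{|xi| <= Lambda} e^{i xi.(x-y)} / (|xi|^2 + 1) d xi.\<close>
definition cov_kernel :: "real \<Rightarrow> pt \<Rightarrow> pt \<Rightarrow> real" where
  "cov_kernel \<Lambda> x y = (1 / (2 * pi) ^ 3) *
     (LINT \<xi>|lborel. indicator (cball 0 \<Lambda>) \<xi> * cos (\<xi> \<bullet> (x - y)) / ((norm \<xi>)\<^sup>2 + 1))"

text \<open>phi is a realization of the centered Gaussian random field with covariance C
  on the probability space M (characteristic functions of all finite linear
  combinations), with continuous sample paths, jointly measurable.\<close>
definition gaussian_field :: "'w measure \<Rightarrow> ('w \<Rightarrow> pt \<Rightarrow> real) \<Rightarrow> (pt \<Rightarrow> pt \<Rightarrow> real) \<Rightarrow> bool" where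
  "gaussian_field M \<phi> C \<longleftrightarrow>
     prob_space M \<and>
     (\<lambda>(\<omega>, x). \<phi> \<omega> x) \<in> borel_measurable (M \<Otimes>\<^sub>M lborel) \<and>
     (\<forall>\<omega>\<in>space M. continuous_on UNIV (\<phi> \<omega>)) \<and>
     (\<forall>xs :: pt list. \<forall>as :: real list. length as = length xs \<longrightarrow>
        (LINT \<omega>|M. cis (\<Sum>i<length xs. as ! i * \<phi> \<omega> (xs ! i))) =
        complex_of_real (exp (- (1/2) * (\<Sum>i<length xs. \<Sum>j<length xs.
              as ! i * as ! j * C (xs ! i) (xs ! j)))))"

definition weight :: "real \<Rightarrow> real \<Rightarrow> (pt \<Rightarrow> real) \<Rightarrow> ('w \<Rightarrow> pt \<Rightarrow> real) \<Rightarrow> 'w \<Rightarrow> real" where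
  "weight c a \<rho> \<phi> \<omega> = exp (- c * (LINT x|lborel. (\<rho> x * \<phi> \<omega> x) ^ 4)
                              - c * a * (LINT x|lborel. (\<rho> x * \<phi> \<omega> x) ^ 2))"

definition nu :: "'w measure \<Rightarrow> real \<Rightarrow> real \<Rightarrow> (pt \<Rightarrow> real) \<Rightarrow> ('w \<Rightarrow> pt \<Rightarrow> real) \<Rightarrow> 'w measure" where
  "nu M c a \<rho> \<phi> = density M (\<lambda>\<omega>. ennreal (weight c a \<rho> \<phi> \<omega> /
                        (LINT \<omega>'|M. weight c a \<rho> \<phi> \<omega>')))"

text \<open>The smeared field (rho Pi_Lambda Phi)(f) = int f rho Phi_Lambda.\<close>
definition smeared :: "(pt \<Rightarrow> real) \<Rightarrow> ('w \<Rightarrow> pt \<Rightarrow> real) \<Rightarrow> (pt \<Rightarrow> complex) \<Rightarrow> 'w \<Rightarrow> complex" where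
  "smeared \<rho> \<phi> f \<omega> = (LINT x|lborel. f x * complex_of_real (\<rho> x * \<phi> \<omega> x))"

definition square_integrable :: "(pt \<Rightarrow> complex) \<Rightarrow> bool" where
  "square_integrable f \<longleftrightarrow> f \<in> borel_measurable lborel \<and> integrable lborel (\<lambda>x. (cmod (f x))\<^sup>2)"

end

theory Submission
  imports Defs
begin

lemma gf_meas:
  assumes "gaussian_field M \<phi> C"
  shows "(\<lambda>\<omega>. \<phi> \<omega> x) \<in> borel_measurable M"
proof -
  have j: "(\<lambda>(\<omega>, x). \<phi> \<omega> x) \<in> borel_measurable (M \<Otimes>\<^sub>M lborel)"
    using assms unfolding gaussian_field_def by blast
  have "(\<lambda>\<omega>. (\<omega>, x)) \<in> measurable M (M \<Otimes>\<^sub>M lborel)" by measurable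
  from measurable_compose[OF this j] show ?thesis by simp
qed

lemma gf_second_moment:
  assumes gf: "gaussian_field M \<phi> C" and len: "length as = length xs"
  defines "Y \<equiv> (\<lambda>\<omega>. \<Sum>i<length xs. as ! i * \<phi> \<omega> (xs ! i))"
  defines "V \<equiv> (\<Sum>i<length xs. \<Sum>j<length xs. as ! i * as ! j * C (xs ! i) (xs ! j))"
  shows "integrable M (\<lambda>\<omega>. (Y \<omega>)\<^sup>2) \<and> (LINT \<omega>|M. (Y \<omega>)\<^sup>2) = V"
proof -
  interpret P: prob_space M using gf unfolding gaussian_field_def by blast
  have cf: "\<And>xs as. length as = length xs \<Longrightarrow> (LINT \<omega>|M. cis (\<Sum>i<length xs. as ! i * \<phi> \<omega> (xs ! i))) =
        complex_of_real (exp (- (1/2) * (\<Sum>i<length xs. \<Sum>j<length xs.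
              as ! i * as ! j * C (xs ! i) (xs ! j))))"
    using gf unfolding gaussian_field_def by blast
  have Ym[measurable]: "Y \<in> borel_measurable M"
    unfolding Y_def using gf_meas[OF gf] by measurable
  have cY: "(LINT \<omega>|M. cis (t * Y \<omega>)) = complex_of_real (exp (- (t^2 * V) / 2))" for t
  proof -
    have "(LINT \<omega>|M. cis (t * Y \<omega>)) = (LINT \<omega>|M. cis (\<Sum>i<length xs. map ((*) t) as ! i * \<phi> \<omega> (xs ! i)))"
      unfolding Y_def by (intro Bochner_Integration.integral_cong refl)
        (simp add: sum_distrib_left len mult.assoc)
    also have "\<dots> = complex_of_real (exp (- (1/2) * (\<Sum>i<length xs. \<Sum>j<length xs.
              map ((*) t) as ! i * map ((*) t) as ! j * C (xs ! i) (xs ! j))))"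
      by (rule cf) (simp add: len)
    also have "(\<Sum>i<length xs. \<Sum>j<length xs.
              map ((*) t) as ! i * map ((*) t) as ! j * C (xs ! i) (xs ! j)) = t^2 * V"
      unfolding V_def by (simp add: len sum_distrib_left power2_eq_square mult_ac)
    finally show ?thesis by simp
  qed
  have V0: "V \<ge> 0"
  proof -
    have "norm (LINT \<omega>|M. cis (1 * Y \<omega>)) \<le> (LINT \<omega>|M. norm (cis (1 * Y \<omega>)))"
      by (rule integral_norm_bound)
    also have "\<dots> = 1" by (simp add: P.prob_space)
    finally have "exp (- V / 2) \<le> 1" using cY[of 1] by simp
    then show ?thesis by simp
  qed
  define \<sigma> where "\<sigma> = sqrt V"
  define N where "N = distr std_normal_distribution borel ((*) \<sigma>)"
  interpret SN: prob_space std_normal_distribution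
    using real_dist_normal_dist real_distribution_def by blast
  have rdN: "real_distribution N" unfolding N_def
    by (rule SN.real_distribution_distr) simp
  have rdY: "real_distribution (distr M borel Y)"
    by (rule P.real_distribution_distr) simp
  have "char (distr M borel Y) = char N"
  proof
    fix t
    have "char (distr M borel Y) t = (LINT \<omega>|M. iexp (t * Y \<omega>))"
      unfolding char_def by (subst integral_distr) auto
    also have "\<dots> = (LINT \<omega>|M. cis (t * Y \<omega>))"
      by (simp add: cis_conv_exp)
    also have "\<dots> = complex_of_real (exp (- (t^2 * V) / 2))" by (rule cY)
    also have "\<dots> = char std_normal_distribution (t * \<sigma>)"
      unfolding char_std_normal_distribution \<sigma>_def using V0
      by (simp add: power_mult_distrib)
    also have "\<dots> = char N t"
      unfolding char_def N_def by (subst integral_distr) (auto simp: mult_ac)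
    finally show "char (distr M borel Y) t = char N t" .
  qed
  then have eqd: "distr M borel Y = N"
    using Levy_uniqueness[OF rdY rdN] by blast
  have i1: "integrable M (\<lambda>\<omega>. (Y \<omega>)\<^sup>2) \<longleftrightarrow> integrable (distr M borel Y) (\<lambda>z. z\<^sup>2)"
    by (subst integrable_distr_eq) auto
  have i2: "integrable N (\<lambda>z. z\<^sup>2)"
    unfolding N_def
    using std_normal_distribution_even_moments(2)[of 1]
    by (subst integrable_distr_eq) (auto simp: power_mult_distrib)
  have e1: "(LINT \<omega>|M. (Y \<omega>)\<^sup>2) = (LINT z|distr M borel Y. z\<^sup>2)"
    by (subst integral_distr) auto
  have e2: "(LINT z|N. z\<^sup>2) = V"
    unfolding N_def
    using std_normal_distribution_even_moments(1)[of 1] V0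
    by (subst integral_distr) (auto simp: power_mult_distrib \<sigma>_def)
  show ?thesis using i1 i2 e1 e2 eqd by simp
qed

lemma gf_cov:
  assumes gf: "gaussian_field M \<phi> C" and sym: "C y x = C x y"
  shows "integrable M (\<lambda>\<omega>. (\<phi> \<omega> x)\<^sup>2)" "(LINT \<omega>|M. (\<phi> \<omega> x)\<^sup>2) = C x x"
    "integrable M (\<lambda>\<omega>. \<phi> \<omega> x * \<phi> \<omega> y)" "(LINT \<omega>|M. \<phi> \<omega> x * \<phi> \<omega> y) = C x y"
proof -
  have A: "integrable M (\<lambda>\<omega>. (\<phi> \<omega> z)\<^sup>2) \<and> (LINT \<omega>|M. (\<phi> \<omega> z)\<^sup>2) = C z z" for z
    using gf_second_moment[OF gf, of "[1]" "[z]"] by simp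
  have B: "integrable M (\<lambda>\<omega>. (\<phi> \<omega> x + \<phi> \<omega> y)\<^sup>2) \<and> (LINT \<omega>|M. (\<phi> \<omega> x + \<phi> \<omega> y)\<^sup>2) =
      C x x + C x y + (C y x + C y y)"
    using gf_second_moment[OF gf, of "[1,1]" "[x,y]"] by (simp add: numeral_2_eq_2)
  show "integrable M (\<lambda>\<omega>. (\<phi> \<omega> x)\<^sup>2)" "(LINT \<omega>|M. (\<phi> \<omega> x)\<^sup>2) = C x x" using A by auto
  have eq: "(\<lambda>\<omega>. \<phi> \<omega> x * \<phi> \<omega> y) = (\<lambda>\<omega>. ((\<phi> \<omega> x + \<phi> \<omega> y)\<^sup>2 - (\<phi> \<omega> x)\<^sup>2 - (\<phi> \<omega> y)\<^sup>2) / 2)"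
    by (auto simp: power2_eq_square algebra_simps)
  show "integrable M (\<lambda>\<omega>. \<phi> \<omega> x * \<phi> \<omega> y)"
    unfolding eq using A[of x] A[of y] B by auto
  show "(LINT \<omega>|M. \<phi> \<omega> x * \<phi> \<omega> y) = C x y"
    unfolding eq using A[of x] A[of y] B sym by simp
qed

lemma gf_joint:
  assumes "gaussian_field M \<phi> C"
  shows "(\<lambda>(\<omega>, x). \<phi> \<omega> x) \<in> borel_measurable (M \<Otimes>\<^sub>M lborel)"
  using assms unfolding gaussian_field_def by blast

lemma gf_comp:
  assumes "gaussian_field M \<phi> C" "f \<in> measurable N M" "g \<in> borel_measurable N"
  shows "(\<lambda>z. \<phi> (f z) (g z)) \<in> borel_measurable N"
proof -
  have "(\<lambda>z. (f z, g z)) \<in> measurable N (M \<Otimes>\<^sub>M lborel)"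
    using assms(2,3) by (intro measurable_Pair) auto
  from measurable_compose[OF this gf_joint[OF assms(1)]] show ?thesis by simp
qed

lemma gf_abs_prod_bound:
  assumes gf: "gaussian_field M \<phi> C" and sym: "\<And>x y. C y x = C x y" and diag: "\<And>x. C x x = K0"
  shows "(\<integral>\<^sup>+\<omega>. ennreal (norm (\<phi> \<omega> x * \<phi> \<omega> y)) \<partial>M) \<le> ennreal K0"
proof -
  note c = gf_cov[OF gf sym]
  have ia: "integrable M (\<lambda>\<omega>. norm (\<phi> \<omega> x * \<phi> \<omega> y))" using c(3)[of x y] by auto
  have "(\<integral>\<^sup>+\<omega>. ennreal (norm (\<phi> \<omega> x * \<phi> \<omega> y)) \<partial>M) = ennreal (LINT \<omega>|M. norm (\<phi> \<omega> x * \<phi> \<omega> y))"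
    by (rule nn_integral_eq_integral[OF ia]) auto
  also have "(LINT \<omega>|M. norm (\<phi> \<omega> x * \<phi> \<omega> y)) \<le> (LINT \<omega>|M. ((\<phi> \<omega> x)\<^sup>2 + (\<phi> \<omega> y)\<^sup>2) / 2)"
  proof (rule integral_mono[OF ia])
    show "integrable M (\<lambda>\<omega>. ((\<phi> \<omega> x)\<^sup>2 + (\<phi> \<omega> y)\<^sup>2) / 2)" using c(1)[of x] c(1)[of y] by auto
    fix \<omega>
    have "0 \<le> (\<bar>\<phi> \<omega> x\<bar> - \<bar>\<phi> \<omega> y\<bar>)\<^sup>2" by simp
    then show "norm (\<phi> \<omega> x * \<phi> \<omega> y) \<le> ((\<phi> \<omega> x)\<^sup>2 + (\<phi> \<omega> y)\<^sup>2) / 2"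
      by (simp add: power2_eq_square algebra_simps abs_mult)
  qed
  also have "\<dots> = K0" using c(1)[of x] c(1)[of y] c(2)[of x] c(2)[of y] diag by simp
  finally show ?thesis by (simp add: ennreal_leI)
qed

lemma gf_fubini:
  fixes q p :: pt and \<delta> :: real
  assumes gf: "gaussian_field M \<phi> C" and sym: "\<And>x y. C y x = C x y" and diag: "\<And>x. C x x = K0"
  defines "T \<equiv> (\<lambda>r \<omega>. LINT u|lborel. indicator (ball 0 \<delta>) u * \<phi> \<omega> (r + u))"
  defines "H \<equiv> (\<lambda>z::pt\<times>pt. indicator (ball 0 \<delta>) (fst z) * indicator (ball 0 \<delta>) (snd z) * C (q + fst z) (p + snd z))"
  shows "integrable M (\<lambda>\<omega>. T q \<omega> * T p \<omega>)"
    "(LINT \<omega>|M. T q \<omega> * T p \<omega>) = integral\<^sup>L (lborel \<Otimes>\<^sub>M lborel) H"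
    "integrable (lborel \<Otimes>\<^sub>M lborel) H"
proof -
  interpret P: prob_space M using gf unfolding gaussian_field_def by blast
  define L2 where "L2 = (lborel \<Otimes>\<^sub>M lborel :: (pt \<times> pt) measure)"
  have sfL2: "sigma_finite_measure L2" unfolding L2_def lborel_prod by (rule sigma_finite_lborel)
  interpret PS: pair_sigma_finite M L2
    by (intro pair_sigma_finite.intro P.sigma_finite_measure sfL2)
  define B where "B = ball (0::pt) \<delta>"
  define G where "G = (\<lambda>\<omega> (z::pt\<times>pt). indicator B (fst z) * \<phi> \<omega> (q + fst z) * (indicator B (snd z) * \<phi> \<omega> (p + snd z)) :: real)"
  have Gm: "case_prod G \<in> borel_measurable (M \<Otimes>\<^sub>M L2)"
  proof -
    have a: "(\<lambda>w::'a\<times>(pt\<times>pt). \<phi> (fst w) (q + fst (snd w))) \<in> borel_measurable (M \<Otimes>\<^sub>M L2)"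
      by (rule gf_comp[OF gf]) (auto simp: L2_def)
    have b: "(\<lambda>w::'a\<times>(pt\<times>pt). \<phi> (fst w) (p + snd (snd w))) \<in> borel_measurable (M \<Otimes>\<^sub>M L2)"
      by (rule gf_comp[OF gf]) (auto simp: L2_def)
    have ib: "indicator B \<in> borel_measurable (lborel::pt measure)"
      by (rule borel_measurable_indicator) (auto simp: B_def)
    have c: "(\<lambda>w::'a\<times>(pt\<times>pt). indicator B (fst (snd w)) :: real) \<in> borel_measurable (M \<Otimes>\<^sub>M L2)"
      using measurable_compose[OF measurable_compose[OF measurable_snd measurable_fst] ib]
      by (simp add: L2_def o_def)
    have d: "(\<lambda>w::'a\<times>(pt\<times>pt). indicator B (snd (snd w)) :: real) \<in> borel_measurable (M \<Otimes>\<^sub>M L2)"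
      using measurable_compose[OF measurable_compose[OF measurable_snd measurable_snd] ib]
      by (simp add: L2_def o_def)
    show ?thesis unfolding G_def split_beta' using a b c d
      by (intro borel_measurable_times) (auto simp: L2_def)
  qed
  have Gint: "integrable (M \<Otimes>\<^sub>M L2) (case_prod G)"
  proof (subst integrable_iff_bounded, intro conjI Gm)
    have "(\<integral>\<^sup>+w. ennreal (norm (case_prod G w)) \<partial>(M \<Otimes>\<^sub>M L2)) =
        (\<integral>\<^sup>+z. (\<integral>\<^sup>+\<omega>. ennreal (norm (G \<omega> z)) \<partial>M) \<partial>L2)"
      using PS.nn_integral_snd[of "\<lambda>w. ennreal (norm (case_prod G w))"] Gm by simp
    also have "\<dots> \<le> (\<integral>\<^sup>+z. ennreal K0 * indicator (B \<times> B) z \<partial>L2)"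
    proof (rule nn_integral_mono)
      fix z :: "pt \<times> pt"
      show "(\<integral>\<^sup>+\<omega>. ennreal (norm (G \<omega> z)) \<partial>M) \<le> ennreal K0 * indicator (B \<times> B) z"
      proof (cases "z \<in> B \<times> B")
        case True
        then have "\<And>\<omega>. G \<omega> z = \<phi> \<omega> (q + fst z) * \<phi> \<omega> (p + snd z)"
          by (auto simp: G_def indicator_def mem_Times_iff)
        then show ?thesis using True gf_abs_prod_bound[OF gf sym diag] by simp
      next
        case False
        then have "\<And>\<omega>. G \<omega> z = 0"
          by (auto simp: G_def indicator_def mem_Times_iff)
        then show ?thesis using False by simp
      qed
    qed
    also have "\<dots> = ennreal K0 * emeasure L2 (B \<times> B)"
      by (rule nn_integral_cmult_indicator) (auto simp: L2_def B_def)
    also have "emeasure L2 (B \<times> B) = emeasure lborel B * emeasure lborel B"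
      unfolding L2_def by (rule lborel.emeasure_pair_measure_Times) (auto simp: B_def)
    also have "ennreal K0 * (emeasure lborel B * emeasure lborel B) < \<infinity>"
      using emeasure_lborel_ball_finite[of "0::pt" \<delta>] by (simp add: B_def ennreal_mult_less_top top.not_eq_extremum)
    finally show "(\<integral>\<^sup>+w. ennreal (norm (case_prod G w)) \<partial>(M \<Otimes>\<^sub>M L2)) < \<infinity>" .
  qed
  have Tm: "T r \<in> borel_measurable M" for r
  proof -
    have "(\<lambda>w::'a\<times>pt. \<phi> (fst w) (r + snd w)) \<in> borel_measurable (M \<Otimes>\<^sub>M lborel)"
      by (rule gf_comp[OF gf]) auto
    moreover have "(\<lambda>w::'a\<times>pt. indicator (ball 0 \<delta>) (snd w) :: real) \<in> borel_measurable (M \<Otimes>\<^sub>M lborel)"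
      using measurable_compose[OF measurable_snd borel_measurable_indicator[of "ball (0::pt) \<delta>" lborel]]
      by (simp add: o_def)
    ultimately have "(\<lambda>(\<omega>, u). indicator (ball 0 \<delta>) u * \<phi> \<omega> (r + u)) \<in> borel_measurable (M \<Otimes>\<^sub>M lborel)"
      unfolding split_beta' by (intro borel_measurable_times)
    then show ?thesis unfolding T_def by (rule lborel.borel_measurable_lebesgue_integral)
  qed
  have AEeq: "AE \<omega> in M. (LINT z|L2. G \<omega> z) = T q \<omega> * T p \<omega>"
    using PS.AE_integrable_fst'[OF Gint]
  proof eventually_elim
    case (elim \<omega>)
    then have i: "integrable (lborel \<Otimes>\<^sub>M lborel) (\<lambda>z. G \<omega> z)" by (simp add: L2_def)
    have "(LINT z|L2. G \<omega> z) = (LINT u|lborel. LINT v|lborel. G \<omega> (u, v))"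
      unfolding L2_def by (rule lborel_pair.integral_fst'[symmetric]) (use i in simp)
    also have "\<dots> = T q \<omega> * T p \<omega>"
      by (simp add: G_def T_def B_def)
    finally show ?case .
  qed
  have Cint: "(LINT \<omega>|M. G \<omega> z) = H z" for z
  proof -
    have "(LINT \<omega>|M. G \<omega> z) = (LINT \<omega>|M. (indicator B (fst z) * indicator B (snd z)) * (\<phi> \<omega> (q + fst z) * \<phi> \<omega> (p + snd z)))"
      by (simp add: G_def mult_ac)
    also have "\<dots> = H z" using gf_cov(4)[OF gf sym] by (simp add: H_def B_def)
    finally show ?thesis .
  qed
  have intTT: "integrable M (\<lambda>\<omega>. LINT z|L2. G \<omega> z)" using PS.integrable_fst'[OF Gint] by simp
  show "integrable M (\<lambda>\<omega>. T q \<omega> * T p \<omega>)"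
    by (rule integrable_cong_AE_imp[OF intTT]) (use Tm AEeq in auto)
  have "integrable L2 (\<lambda>z. LINT \<omega>|M. G \<omega> z)" by (rule PS.integrable_snd[OF Gint])
  then show "integrable (lborel \<Otimes>\<^sub>M lborel) H" using Cint by (simp add: L2_def)
  have "(LINT \<omega>|M. T q \<omega> * T p \<omega>) = (LINT \<omega>|M. LINT z|L2. G \<omega> z)"
    by (rule integral_cong_AE) (use Tm AEeq borel_measurable_integrable[OF intTT] in \<open>auto simp: eq_commute\<close>)
  also have "\<dots> = integral\<^sup>L (M \<Otimes>\<^sub>M L2) (case_prod G)" by (rule PS.integral_fst[OF Gint])
  also have "\<dots> = (LINT z|L2. LINT \<omega>|M. G \<omega> z)" by (rule PS.integral_snd[OF Gint, symmetric])
  also have "\<dots> = integral\<^sup>L (lborel \<Otimes>\<^sub>M lborel) H" using Cint by (simp add: L2_def)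
  finally show "(LINT \<omega>|M. T q \<omega> * T p \<omega>) = integral\<^sup>L (lborel \<Otimes>\<^sub>M lborel) H" .
qed

lemma integral_neg_strict:
  fixes f :: "'a \<Rightarrow> real"
  assumes f: "integrable M f" and le: "\<And>x. x \<in> space M \<Longrightarrow> f x \<le> 0"
    and A: "A \<in> sets M" "emeasure M A \<noteq> 0" and lt: "\<And>x. x \<in> A \<Longrightarrow> f x < 0"
  shows "integral\<^sup>L M f < 0"
proof -
  have mf: "integrable M (\<lambda>x. - f x)" using f by (rule integrable_minus)
  have nn: "AE x in M. 0 \<le> - f x" using le by (intro AE_I2) simp
  have ge: "integral\<^sup>L M (\<lambda>x. - f x) \<ge> 0" using nn by (rule integral_nonneg_AE)
  have ne: "integral\<^sup>L M (\<lambda>x. - f x) \<noteq> 0"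
  proof
    assume "integral\<^sup>L M (\<lambda>x. - f x) = 0"
    then have ae: "AE x in M. - f x = 0" using integral_nonneg_eq_0_iff_AE[OF mf nn] by blast
    have "AE x in M. x \<notin> A" using ae
    proof (rule AE_mp, intro AE_I2 impI)
      fix x assume "- f x = 0" then show "x \<notin> A" using lt[of x] by auto
    qed
    moreover have eqs: "{x\<in>space M. \<not> x \<notin> A} = A" using sets.sets_into_space[OF A(1)] by auto
    ultimately have "emeasure M A = 0" using AE_iff_measurable[OF A(1) eqs] by simp
    then show False using A(2) by blast
  qed
  have "integral\<^sup>L M (\<lambda>x. - f x) = - integral\<^sup>L M f" by (rule Bochner_Integration.integral_minus)
  then show ?thesis using ge ne by linarith
qed

lemma emeasure_ball_pos:
  assumes "r > 0" shows "emeasure lborel (ball (c::'a::euclidean_space) r) \<noteq> 0"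
proof -
  have "measure lborel (ball c r) > 0" using content_ball_pos[OF assms] by simp
  moreover have "emeasure lborel (ball c r) = ennreal (measure lborel (ball c r))"
    using emeasure_lborel_ball_finite[of c r] by (intro emeasure_eq_ennreal_measure) simp
  ultimately show ?thesis by simp
qed

definition kint :: "real \<Rightarrow> pt \<Rightarrow> pt \<Rightarrow> real" where
  "kint \<Lambda> z \<xi> = indicator (cball 0 \<Lambda>) \<xi> * cos (\<xi> \<bullet> z) / ((norm \<xi>)\<^sup>2 + 1)"

lemma kint_integrable: "integrable lborel (kint \<Lambda> z)"
proof (rule Bochner_Integration.integrable_bound)
  show "integrable lborel (indicator (cball (0::pt) \<Lambda>) :: pt \<Rightarrow> real)"
    using emeasure_lborel_cball_finite[of "0::pt" \<Lambda>] by (intro integrable_real_indicator) auto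
  show "kint \<Lambda> z \<in> borel_measurable lborel"
  proof -
    have a: "(\<lambda>x::pt. cos (x \<bullet> z) / ((norm x)\<^sup>2 + 1)) \<in> borel_measurable borel"
      by (intro borel_measurable_continuous_onI continuous_intros allI, smt (verit) zero_le_power2)
    moreover have b: "(indicator (cball (0::pt) \<Lambda>) :: pt \<Rightarrow> real) \<in> borel_measurable borel"
      by (rule borel_measurable_indicator) simp
    ultimately have "(\<lambda>x::pt. indicator (cball (0::pt) \<Lambda>) x * (cos (x \<bullet> z) / ((norm x)\<^sup>2 + 1))) \<in> borel_measurable borel"
      using borel_measurable_times[OF b a] by simp
    then show ?thesis unfolding kint_def by simp
  qed
  show "AE x in lborel. norm (kint \<Lambda> z x) \<le> norm (indicator (cball (0::pt) \<Lambda>) x :: real)"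
  proof (intro AE_I2)
    fix x :: pt
    have d: "1 \<le> (norm x)\<^sup>2 + 1" by simp
    have "\<bar>cos (x \<bullet> z)\<bar> \<le> (norm x)\<^sup>2 + 1" using d abs_cos_le_one[of "x \<bullet> z"] by linarith
    moreover have "(norm x)\<^sup>2 + 1 > 0" using d by linarith
    ultimately have "\<bar>cos (x \<bullet> z)\<bar> / ((norm x)\<^sup>2 + 1) \<le> 1" by (simp add: divide_le_eq_1_pos)
    then show "norm (kint \<Lambda> z x) \<le> norm (indicator (cball (0::pt) \<Lambda>) x :: real)"
      by (auto simp: kint_def indicator_def abs_mult)
  qed
qed

lemma cov_kernel_kint: "cov_kernel \<Lambda> x y = (1 / (2 * pi) ^ 3) * integral\<^sup>L lborel (kint \<Lambda> (x - y))"
  unfolding cov_kernel_def kint_def by simp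

lemma cov_kernel_sym: "cov_kernel \<Lambda> y x = cov_kernel \<Lambda> x y"
proof -
  have "kint \<Lambda> (y - x) = kint \<Lambda> (x - y)"
  proof
    fix \<xi> :: pt
    have "\<xi> \<bullet> (y - x) = - (\<xi> \<bullet> (x - y))" by (simp add: inner_diff_right)
    then show "kint \<Lambda> (y - x) \<xi> = kint \<Lambda> (x - y) \<xi>" by (simp add: kint_def)
  qed
  then show ?thesis by (simp add: cov_kernel_kint)
qed

lemma cov_kernel_diag: "cov_kernel \<Lambda> x x = cov_kernel \<Lambda> 0 0"
  by (simp add: cov_kernel_kint)

abbreviation e1 :: pt where "e1 \<equiv> axis 1 1"

lemma inner_e1: "\<xi> \<bullet> (w - k *\<^sub>R e1) = \<xi> \<bullet> w - k * \<xi> $ 1"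
  by (simp add: inner_diff_right inner_axis)

lemma cos_combo:
  fixes x a b t :: real
  shows "cos (x - 2 * a * t) - 2 * cos (x - (a + b) * t) + cos (x - 2 * b * t)
   = 2 * cos (x - (a + b) * t) * (cos ((b - a) * t) - 1)"
proof -
  have 1: "x - 2 * a * t = (x - (a + b) * t) + (b - a) * t" by (simp add: algebra_simps)
  have 2: "x - 2 * b * t = (x - (a + b) * t) - (b - a) * t" by (simp add: algebra_simps)
  show ?thesis unfolding 1 2 cos_add cos_diff by (simp add: algebra_simps)
qed

lemma kernel_neg:
  fixes u v :: pt and s \<Lambda> :: real
  assumes L: "\<Lambda> > 0" and s: "s > 0" "8 * s * \<Lambda> \<le> 1" and uv: "norm u < s" "norm v < s"
  shows "cov_kernel \<Lambda> ((- (2 * s)) *\<^sub>R e1 + u) ((2 * s) *\<^sub>R e1 + v)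
       - cov_kernel \<Lambda> ((- (2 * s)) *\<^sub>R e1 + u) ((4 * s) *\<^sub>R e1 + v)
       - cov_kernel \<Lambda> ((- (4 * s)) *\<^sub>R e1 + u) ((2 * s) *\<^sub>R e1 + v)
       + cov_kernel \<Lambda> ((- (4 * s)) *\<^sub>R e1 + u) ((4 * s) *\<^sub>R e1 + v) < 0"
proof -
  define w where "w = u - v"
  have wn: "norm w < 2 * s" unfolding w_def using norm_triangle_ineq4[of u v] uv by simp
  have d: "\<And>k m. (- k) *\<^sub>R e1 + u - (m *\<^sub>R e1 + v) = w - (k + m) *\<^sub>R e1"
    by (simp add: w_def algebra_simps)
  define D where "D = (\<lambda>\<xi>::pt. indicator (cball 0 \<Lambda>) \<xi> *
       (2 * cos (\<xi> \<bullet> w - (6 * s) * \<xi> $ 1) * (cos ((2 * s) * \<xi> $ 1) - 1)) / ((norm \<xi>)\<^sup>2 + 1))"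
  have Deq: "D = (\<lambda>\<xi>. kint \<Lambda> (w - (2 * s + 2 * s) *\<^sub>R e1) \<xi> - kint \<Lambda> (w - (2 * s + 4 * s) *\<^sub>R e1) \<xi>
        - kint \<Lambda> (w - (4 * s + 2 * s) *\<^sub>R e1) \<xi> + kint \<Lambda> (w - (4 * s + 4 * s) *\<^sub>R e1) \<xi>)"
  proof
    fix \<xi> :: pt
    define A where "A = \<xi> \<bullet> w"
    define t where "t = \<xi> $ 1"
    define N where "N = (norm \<xi>)\<^sup>2 + 1"
    define I where "I = (indicator (cball 0 \<Lambda>) \<xi> :: real)"
    have cc: "cos (A - 2 * (2 * s) * t) - 2 * cos (A - (2 * s + 4 * s) * t) + cos (A - 2 * (4 * s) * t)
       = 2 * cos (A - (2 * s + 4 * s) * t) * (cos ((4 * s - 2 * s) * t) - 1)"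
      by (rule cos_combo)
    have e: "\<And>k. kint \<Lambda> (w - k *\<^sub>R e1) \<xi> = I * cos (A - k * t) / N"
      unfolding kint_def inner_e1 A_def t_def N_def I_def by simp
    have "D \<xi> = I * (2 * cos (A - (6 * s) * t) * (cos ((2 * s) * t) - 1)) / N"
      unfolding D_def A_def t_def N_def I_def by simp
    also have "\<dots> = I * (cos (A - 2 * (2 * s) * t) - 2 * cos (A - (2 * s + 4 * s) * t) + cos (A - 2 * (4 * s) * t)) / N"
      unfolding cc by (simp add: algebra_simps)
    also have "\<dots> = I * cos (A - (2 * s + 2 * s) * t) / N - I * cos (A - (2 * s + 4 * s) * t) / N
        - I * cos (A - (4 * s + 2 * s) * t) / N + I * cos (A - (4 * s + 4 * s) * t) / N"
      by (simp add: add_divide_distrib diff_divide_distrib algebra_simps)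
    finally show "D \<xi> = kint \<Lambda> (w - (2 * s + 2 * s) *\<^sub>R e1) \<xi> - kint \<Lambda> (w - (2 * s + 4 * s) *\<^sub>R e1) \<xi>
        - kint \<Lambda> (w - (4 * s + 2 * s) *\<^sub>R e1) \<xi> + kint \<Lambda> (w - (4 * s + 4 * s) *\<^sub>R e1) \<xi>"
      unfolding e .
  qed
  have Dint: "integrable lborel D" unfolding Deq by (intro Bochner_Integration.integrable_add Bochner_Integration.integrable_diff kint_integrable)
  have LHS: "cov_kernel \<Lambda> ((- (2 * s)) *\<^sub>R e1 + u) ((2 * s) *\<^sub>R e1 + v)
       - cov_kernel \<Lambda> ((- (2 * s)) *\<^sub>R e1 + u) ((4 * s) *\<^sub>R e1 + v)
       - cov_kernel \<Lambda> ((- (4 * s)) *\<^sub>R e1 + u) ((2 * s) *\<^sub>R e1 + v)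
       + cov_kernel \<Lambda> ((- (4 * s)) *\<^sub>R e1 + u) ((4 * s) *\<^sub>R e1 + v) = (1 / (2 * pi) ^ 3) * integral\<^sup>L lborel D"
    unfolding cov_kernel_kint d Deq
    apply (subst Bochner_Integration.integral_add, (intro Bochner_Integration.integrable_diff kint_integrable)+)
    apply (subst Bochner_Integration.integral_diff, (intro Bochner_Integration.integrable_diff kint_integrable)+)
    apply (subst Bochner_Integration.integral_diff, (intro Bochner_Integration.integrable_diff kint_integrable)+)
    by (simp only: algebra_simps)
  have Dle: "D \<xi> \<le> 0" for \<xi>
  proof (cases "\<xi> \<in> cball 0 \<Lambda>")
    case True
    then have nx: "norm \<xi> \<le> \<Lambda>" by simp
    have "\<bar>\<xi> \<bullet> w\<bar> \<le> norm \<xi> * norm w" by (rule Cauchy_Schwarz_ineq2)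
    also have "\<dots> \<le> \<Lambda> * (2 * s)" using nx wn L by (intro mult_mono) auto
    finally have a1: "\<bar>\<xi> \<bullet> w\<bar> \<le> \<Lambda> * (2 * s)" .
    have "\<bar>\<xi> $ 1\<bar> \<le> norm \<xi>" by (rule component_le_norm_cart)
    then have a2: "\<bar>\<xi> $ 1\<bar> \<le> \<Lambda>" using nx by simp
    have "\<bar>(6 * s) * \<xi> $ 1\<bar> \<le> 6 * s * \<Lambda>" using a2 s by (simp add: abs_mult)
    then have "\<bar>\<xi> \<bullet> w - (6 * s) * \<xi> $ 1\<bar> \<le> 8 * s * \<Lambda>" using a1 by (simp add: algebra_simps)
    also have "\<dots> < pi / 2" using s(2) pi_gt3 by simp
    finally have "cos (\<xi> \<bullet> w - (6 * s) * \<xi> $ 1) > 0" by (intro cos_gt_zero_pi) arith+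
    moreover have "cos ((2 * s) * \<xi> $ 1) - 1 \<le> 0" by simp
    ultimately have pp: "2 * cos (\<xi> \<bullet> w - (6 * s) * \<xi> $ 1) * (cos ((2 * s) * \<xi> $ 1) - 1) \<le> 0"
      by (intro mult_nonneg_nonpos) linarith+
    have "indicator (cball 0 \<Lambda>) \<xi> * (2 * cos (\<xi> \<bullet> w - (6 * s) * \<xi> $ 1) * (cos ((2 * s) * \<xi> $ 1) - 1)) \<le> (0::real)"
      by (rule mult_nonneg_nonpos[OF _ pp]) simp
    moreover have "(norm \<xi>)\<^sup>2 + 1 > 0" by (smt (verit) zero_le_power2)
    ultimately show ?thesis unfolding D_def by (rule divide_nonpos_pos)
  next
    case False
    then show ?thesis by (simp add: D_def)
  qed
  define c :: pt where "c = (3 * \<Lambda> / 8) *\<^sub>R e1"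
  have Dlt: "D \<xi> < 0" if \<xi>: "\<xi> \<in> ball c (\<Lambda> / 8)" for \<xi>
  proof -
    have dc: "norm (\<xi> - c) < \<Lambda> / 8" using \<xi> by (simp add: dist_norm norm_minus_commute)
    have nc: "norm c = 3 * \<Lambda> / 8" using L by (simp add: c_def)
    have "norm \<xi> \<le> norm c + norm (\<xi> - c)" using norm_triangle_ineq[of c "\<xi> - c"] by simp
    then have nx: "norm \<xi> \<le> \<Lambda>" using dc nc L by linarith
    then have inb: "\<xi> \<in> cball 0 \<Lambda>" by simp
    have "\<bar>(\<xi> - c) $ 1\<bar> \<le> norm (\<xi> - c)" by (rule component_le_norm_cart)
    then have "\<bar>\<xi> $ 1 - 3 * \<Lambda> / 8\<bar> < \<Lambda> / 8" using dc by (simp add: c_def)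
    then have t1: "\<xi> $ 1 > 0" "\<xi> $ 1 < \<Lambda>" using L by arith+
    have "0 < (2 * s) * \<xi> $ 1" using s t1 by simp
    moreover have "(2 * s) * \<xi> $ 1 < pi"
    proof -
      have "(2 * s) * \<xi> $ 1 \<le> 2 * s * \<Lambda>" using t1 s by simp
      also have "\<dots> \<le> 1" using s L by simp
      finally show ?thesis using pi_gt3 by simp
    qed
    ultimately have "cos ((2 * s) * \<xi> $ 1) < cos 0"
      by (intro cos_monotone_0_pi) auto
    then have neg: "cos ((2 * s) * \<xi> $ 1) - 1 < 0" by simp
    have "\<bar>\<xi> \<bullet> w\<bar> \<le> norm \<xi> * norm w" by (rule Cauchy_Schwarz_ineq2)
    also have "\<dots> \<le> \<Lambda> * (2 * s)" using nx wn L by (intro mult_mono) auto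
    finally have a1: "\<bar>\<xi> \<bullet> w\<bar> \<le> \<Lambda> * (2 * s)" .
    have "\<bar>(6 * s) * \<xi> $ 1\<bar> \<le> 6 * s * \<Lambda>" using t1 s by (simp add: abs_mult)
    then have "\<bar>\<xi> \<bullet> w - (6 * s) * \<xi> $ 1\<bar> \<le> 8 * s * \<Lambda>" using a1 by (simp add: algebra_simps)
    also have "\<dots> < pi / 2" using s(2) pi_gt3 by simp
    finally have "cos (\<xi> \<bullet> w - (6 * s) * \<xi> $ 1) > 0" by (intro cos_gt_zero_pi) arith+
    with neg have "2 * cos (\<xi> \<bullet> w - (6 * s) * \<xi> $ 1) * (cos ((2 * s) * \<xi> $ 1) - 1) < 0"
      by (intro mult_pos_neg) auto
    then have "indicator (cball 0 \<Lambda>) \<xi> * (2 * cos (\<xi> \<bullet> w - (6 * s) * \<xi> $ 1) * (cos ((2 * s) * \<xi> $ 1) - 1)) < (0::real)"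
      using inb by simp
    moreover have "(norm \<xi>)\<^sup>2 + 1 > 0" by (smt (verit) zero_le_power2)
    ultimately show ?thesis unfolding D_def by (rule divide_neg_pos)
  qed
  have "integral\<^sup>L lborel D < 0"
    by (rule integral_neg_strict[OF Dint _ _ emeasure_ball_pos Dlt, of c "\<Lambda>/8"]) (use Dle L in auto)
  then show ?thesis unfolding LHS by (simp add: divide_neg_pos)
qed

lemma E0_neg:
  fixes s \<Lambda> :: real
  assumes gf: "gaussian_field M \<phi> (cov_kernel \<Lambda>)" and L: "\<Lambda> > 0" and s: "s > 0" "8 * s * \<Lambda> \<le> 1"
  defines "T \<equiv> (\<lambda>r \<omega>. LINT u|lborel. indicator (ball 0 s) u * \<phi> \<omega> (r + u))"
  defines "X \<equiv> (\<lambda>\<omega>. (T ((- (2 * s)) *\<^sub>R e1) \<omega> - T ((- (4 * s)) *\<^sub>R e1) \<omega>) *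
                    (T ((2 * s) *\<^sub>R e1) \<omega> - T ((4 * s) *\<^sub>R e1) \<omega>))"
  shows "integrable M X" "integral\<^sup>L M X < 0"
proof -
  let ?C = "cov_kernel \<Lambda>"
  have sym: "\<And>x y. ?C y x = ?C x y" by (rule cov_kernel_sym)
  have diag: "\<And>x. ?C x x = ?C 0 0" by (rule cov_kernel_diag)
  define H where "H = (\<lambda>q p (z::pt\<times>pt). indicator (ball 0 s) (fst z) * indicator (ball 0 s) (snd z) * ?C (q + fst z) (p + snd z) :: real)"
  note F = gf_fubini[OF gf sym diag, where \<delta> = s]
  have Fi: "integrable M (\<lambda>\<omega>. T q \<omega> * T p \<omega>)" for q p unfolding T_def by (rule F(1))
  have Fe: "(LINT \<omega>|M. T q \<omega> * T p \<omega>) = integral\<^sup>L (lborel \<Otimes>\<^sub>M lborel) (H q p)" for q p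
    unfolding T_def H_def by (rule F(2))
  have Fh: "integrable (lborel \<Otimes>\<^sub>M lborel) (H q p)" for q p
    unfolding H_def by (rule F(3))
  define qa where "qa = (- (2 * s)) *\<^sub>R e1"
  define qb where "qb = (- (4 * s)) *\<^sub>R e1"
  define pa where "pa = (2 * s) *\<^sub>R e1"
  define pb where "pb = (4 * s) *\<^sub>R e1"
  have Xeq: "X = (\<lambda>\<omega>. T qa \<omega> * T pa \<omega> - T qa \<omega> * T pb \<omega> - T qb \<omega> * T pa \<omega> + T qb \<omega> * T pb \<omega>)"
    unfolding X_def qa_def qb_def pa_def pb_def by (auto simp: algebra_simps)
  show "integrable M X" unfolding Xeq
    by (intro Bochner_Integration.integrable_add Bochner_Integration.integrable_diff Fi)
  have "integral\<^sup>L M X = integral\<^sup>L (lborel \<Otimes>\<^sub>M lborel) (H qa pa) - integral\<^sup>L (lborel \<Otimes>\<^sub>M lborel) (H qa pb)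
      - integral\<^sup>L (lborel \<Otimes>\<^sub>M lborel) (H qb pa) + integral\<^sup>L (lborel \<Otimes>\<^sub>M lborel) (H qb pb)"
    unfolding Xeq
    apply (subst Bochner_Integration.integral_add, (intro Bochner_Integration.integrable_diff Fi)+)
    apply (subst Bochner_Integration.integral_diff, (intro Bochner_Integration.integrable_diff Fi)+)
    apply (subst Bochner_Integration.integral_diff, (intro Bochner_Integration.integrable_diff Fi)+)
    by (simp only: Fe)
  also have "\<dots> = integral\<^sup>L (lborel \<Otimes>\<^sub>M lborel) (\<lambda>z. H qa pa z - H qa pb z - H qb pa z + H qb pb z)"
    apply (subst Bochner_Integration.integral_add, (intro Bochner_Integration.integrable_diff Fh)+)
    apply (subst Bochner_Integration.integral_diff, (intro Bochner_Integration.integrable_diff Fh)+)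
    apply (subst Bochner_Integration.integral_diff, (intro Bochner_Integration.integrable_diff Fh)+)
    by (rule refl)
  also have "\<dots> < 0"
  proof (rule integral_neg_strict)
    show "integrable (lborel \<Otimes>\<^sub>M lborel) (\<lambda>z. H qa pa z - H qa pb z - H qb pa z + H qb pb z)"
      by (intro Bochner_Integration.integrable_add Bochner_Integration.integrable_diff Fh)
    have key: "H qa pa z - H qa pb z - H qb pa z + H qb pb z < 0" if z: "z \<in> ball (0::pt) s \<times> ball (0::pt) s" for z
    proof -
      have n: "norm (fst z) < s" "norm (snd z) < s" using z by (auto simp: mem_Times_iff)
      have "H qa pa z - H qa pb z - H qb pa z + H qb pb z =
          ?C (qa + fst z) (pa + snd z) - ?C (qa + fst z) (pb + snd z) - ?C (qb + fst z) (pa + snd z) + ?C (qb + fst z) (pb + snd z)"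
        using z by (simp add: H_def mem_Times_iff)
      also have "\<dots> < 0" unfolding qa_def qb_def pa_def pb_def
        by (rule kernel_neg[OF L s n])
      finally show ?thesis .
    qed
    show "H qa pa z - H qa pb z - H qb pa z + H qb pb z \<le> 0" for z
    proof (cases "z \<in> ball (0::pt) s \<times> ball (0::pt) s")
      case True then show ?thesis using key by fastforce
    next
      case False then show ?thesis by (auto simp: H_def mem_Times_iff)
    qed
    show "ball (0::pt) s \<times> ball (0::pt) s \<in> sets (lborel \<Otimes>\<^sub>M lborel)" by auto
    have "emeasure (lborel \<Otimes>\<^sub>M lborel) (ball (0::pt) s \<times> ball (0::pt) s) = emeasure lborel (ball (0::pt) s) * emeasure lborel (ball (0::pt) s)"
      by (rule lborel.emeasure_pair_measure_Times) auto
    then show "emeasure (lborel \<Otimes>\<^sub>M lborel) (ball (0::pt) s \<times> ball (0::pt) s) \<noteq> 0"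
      using emeasure_ball_pos[OF s(1), of "0::pt"] by simp
    show "\<And>z. z \<in> ball (0::pt) s \<times> ball (0::pt) s \<Longrightarrow> H qa pa z - H qa pb z - H qb pa z + H qb pb z < 0"
      by (rule key)
  qed
  finally show "integral\<^sup>L M X < 0" .
qed

lemma Theta_comp: "Theta x $ i = (if i = 1 then - x $ i else x $ i)"
  by (simp add: Theta_def)

lemma Theta_diff: "Theta (x - y) = Theta x - Theta y"
  by (simp add: vec_eq_iff Theta_comp)

lemma Theta_Theta: "Theta (Theta x) = x"
  by (simp add: vec_eq_iff Theta_comp)

lemma norm_Theta: "norm (Theta x) = norm x"
proof -
  have "(\<Sum>i\<in>UNIV. (norm (Theta x $ i))\<^sup>2) = (\<Sum>i\<in>UNIV. (norm (x $ i))\<^sup>2)"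
    by (intro sum.cong) (auto simp: Theta_comp)
  then show ?thesis by (simp add: norm_vec_def L2_set_def)
qed

lemma dist_Theta: "dist p (Theta x) = dist (Theta p) x"
proof -
  have "p - Theta x = Theta (Theta p - x)" by (simp add: Theta_diff Theta_Theta)
  then show ?thesis by (simp add: dist_norm norm_Theta)
qed

lemma Theta_e1: "Theta (k *\<^sub>R e1) = (- k) *\<^sub>R e1"
  by (simp add: vec_eq_iff Theta_comp axis_def)

lemma translate_integral:
  fixes h :: "pt \<Rightarrow> real"
  assumes h: "h \<in> borel_measurable borel"
  shows "integral\<^sup>L lborel h = integral\<^sup>L lborel (\<lambda>u. h (p + u))"
proof -
  have "integral\<^sup>L lborel h = integral\<^sup>L (distr lborel borel ((+) p)) h"
    by (simp add: lborel_distr_plus)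
  also have "\<dots> = integral\<^sup>L lborel (\<lambda>u. h (p + u))"
    by (rule integral_distr) (auto simp: h)
  finally show ?thesis .
qed

lemma ball_integrable:
  fixes g :: "pt \<Rightarrow> real"
  assumes g: "continuous_on UNIV g"
  shows "integrable lborel (\<lambda>x. indicator (ball p r) x * g x)"
proof -
  have c: "integrable lborel (\<lambda>x. indicator (cball p r) x *\<^sub>R g x)"
    by (rule borel_integrable_compact) (auto intro: continuous_on_subset[OF g])
  have sb: "ball p r \<in> sets lborel" by simp
  have "integrable lborel (\<lambda>x. indicator (ball p r) x *\<^sub>R (indicator (cball p r) x *\<^sub>R g x))"
    by (rule integrable_mult_indicator[OF sb c])
  moreover have "(\<lambda>x. indicator (ball p r) x *\<^sub>R (indicator (cball p r) x *\<^sub>R g x)) = (\<lambda>x. indicator (ball p r) x * g x)"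
    by (auto simp: indicator_def)
  ultimately show ?thesis by metis
qed

lemma T_eq:
  fixes g \<rho> :: "pt \<Rightarrow> real"
  assumes g: "continuous_on UNIV g" and r: "\<And>x. x \<in> ball p s \<Longrightarrow> \<rho> x = 1"
  shows "(LINT x|lborel. indicator (ball p s) x * (\<rho> x * g x)) = (LINT u|lborel. indicator (ball 0 s) u * g (p + u))"
proof -
  have "(LINT x|lborel. indicator (ball p s) x * (\<rho> x * g x)) = (LINT x|lborel. indicator (ball p s) x * g x)"
    by (intro Bochner_Integration.integral_cong) (auto simp: indicator_def r)
  also have "\<dots> = (LINT u|lborel. indicator (ball p s) (p + u) * g (p + u))"
  proof (rule translate_integral)
    have "g \<in> borel_measurable borel" using g by (rule borel_measurable_continuous_onI)
    then show "(\<lambda>x. indicator (ball p s) x * g x) \<in> borel_measurable borel"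
      by (intro borel_measurable_times borel_measurable_indicator) auto
  qed
  also have "\<dots> = (LINT u|lborel. indicator (ball 0 s) u * g (p + u))"
    by (intro Bochner_Integration.integral_cong) (auto simp: indicator_def dist_norm)
  finally show ?thesis .
qed

lemma rho_cont:
  assumes "smooth_fun \<rho>" shows "continuous_on UNIV \<rho>"
proof -
  have "\<And>x. \<rho> differentiable (at x)" using assms unfolding smooth_fun_def
    by (metis pderivs.simps(1))
  then show ?thesis
    by (intro continuous_at_imp_continuous_on ballI differentiable_imp_continuous_within) auto
qed

lemma gf_cont:
  assumes "gaussian_field M \<phi> C" "\<omega> \<in> space M"
  shows "continuous_on UNIV (\<phi> \<omega>)"
proof -
  have "\<forall>\<omega>\<in>space M. continuous_on UNIV (\<phi> \<omega>)"
    using assms(1) unfolding gaussian_field_def by (elim conjE) assumption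
  then show ?thesis using assms(2) by (rule bspec)
qed

lemma weight_props:
  fixes \<rho> :: "pt \<Rightarrow> real" and a c :: real
  assumes gf: "gaussian_field M \<phi> C" and rc: "continuous_on UNIV \<rho>" and cs: "compact_support \<rho>"
  defines "S \<equiv> closure {x. \<rho> x \<noteq> 0}"
  defines "B \<equiv> a\<^sup>2 / 4 * measure lborel S"
  shows "weight c a \<rho> \<phi> \<in> borel_measurable M"
    "\<And>\<omega>. c \<ge> 0 \<Longrightarrow> \<omega> \<in> space M \<Longrightarrow> 0 < weight c a \<rho> \<phi> \<omega> \<and> weight c a \<rho> \<phi> \<omega> \<le> exp (c * B)"
    "B \<ge> 0"
proof -
  have Sc: "compact S" using cs unfolding compact_support_def S_def .
  have rm: "\<rho> \<in> borel_measurable borel" using rc by (rule borel_measurable_continuous_onI)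
  have a1: "(\<lambda>w::'a\<times>pt. \<rho> (snd w)) \<in> borel_measurable (M \<Otimes>\<^sub>M lborel)"
    using measurable_compose[OF measurable_snd[of M lborel] rm[folded measurable_lborel2]] by (simp add: o_def)
  have a2: "(\<lambda>w::'a\<times>pt. \<phi> (fst w) (snd w)) \<in> borel_measurable (M \<Otimes>\<^sub>M lborel)"
    by (rule gf_comp[OF gf]) auto
  have Qm: "(\<lambda>\<omega>. LINT x|lborel. (\<rho> x * \<phi> \<omega> x) ^ k) \<in> borel_measurable M" for k
  proof -
    have "(\<lambda>(\<omega>, x). (\<rho> x * \<phi> \<omega> x) ^ k) \<in> borel_measurable (M \<Otimes>\<^sub>M lborel)"
      unfolding split_beta' using a1 a2 by (intro borel_measurable_power borel_measurable_times)
    then show ?thesis by (rule lborel.borel_measurable_lebesgue_integral)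
  qed
  show "weight c a \<rho> \<phi> \<in> borel_measurable M"
    unfolding weight_def[abs_def] using Qm[of 4] Qm[of 2] by measurable
  show B0: "B \<ge> 0" unfolding B_def by simp
  fix \<omega> assume c: "c \<ge> 0" and \<omega>: "\<omega> \<in> space M"
  have pc: "continuous_on UNIV (\<phi> \<omega>)" using gf_cont[OF gf \<omega>] .
  define g where "g = (\<lambda>x. \<rho> x * \<phi> \<omega> x)"
  have gc: "continuous_on UNIV g" unfolding g_def by (rule continuous_on_mult[OF rc pc])
  have gS: "g x = 0" if "x \<notin> S" for x
  proof -
    have "x \<notin> {x. \<rho> x \<noteq> 0}" by (rule contra_subsetD[OF closure_subset that[unfolded S_def]])
    then have "\<rho> x = 0" by simp
    then show ?thesis by (simp add: g_def)
  qed
  have gi: "integrable lborel (\<lambda>x. (g x) ^ k)" if k: "k > 0" for k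
  proof -
    have "integrable lborel (\<lambda>x. indicator S x *\<^sub>R (g x) ^ k)"
      by (rule borel_integrable_compact[OF Sc]) (rule continuous_on_subset[OF continuous_on_power[OF gc]], simp)
    moreover have "(\<lambda>x. indicator S x *\<^sub>R (g x) ^ k) = (\<lambda>x. (g x) ^ k)"
    proof
      fix x show "indicator S x *\<^sub>R (g x) ^ k = (g x) ^ k"
        using gS[of x] k by (cases "x \<in> S") (auto simp: power_0_left)
    qed
    ultimately show ?thesis by metis
  qed
  have Sfin: "emeasure lborel S < \<infinity>" using Sc by (intro emeasure_bounded_finite compact_imp_bounded)
  have iS: "integrable lborel (\<lambda>x. indicator S x * (- a\<^sup>2 / 4) :: real)"
  proof -
    have "S \<in> sets lborel" using compact_imp_closed[OF Sc] by (simp add: borel_closed)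
    then have "integrable lborel (indicator S :: pt \<Rightarrow> real)"
      using Sfin by (intro integrable_real_indicator) auto
    then show ?thesis by (rule Bochner_Integration.integrable_mult_left)
  qed
  have "(LINT x|lborel. indicator S x * (- a\<^sup>2 / 4)) \<le> (LINT x|lborel. (g x) ^ 4 + a * (g x) ^ 2)"
  proof (rule integral_mono[OF iS])
    show "integrable lborel (\<lambda>x. (g x) ^ 4 + a * (g x) ^ 2)"
      using gi[of 4] gi[of 2] by auto
    fix x
    have "0 \<le> ((g x)\<^sup>2 + a / 2)\<^sup>2" by simp
    then have "- a\<^sup>2 / 4 \<le> (g x) ^ 4 + a * (g x) ^ 2"
      by (simp add: power2_eq_square power4_eq_xxxx algebra_simps)
    then show "indicator S x * (- a\<^sup>2 / 4) \<le> (g x) ^ 4 + a * (g x) ^ 2"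
      using gS[of x] by (cases "x \<in> S") auto
  qed
  moreover have "(LINT x|lborel. indicator S x * (- a\<^sup>2 / 4)) = - B"
    using Sfin Sc by (simp add: B_def compact_imp_closed less_top[symmetric])
  moreover have "(LINT x|lborel. (g x) ^ 4 + a * (g x) ^ 2) = (LINT x|lborel. (g x) ^ 4) + a * (LINT x|lborel. (g x) ^ 2)"
    using gi[of 4] gi[of 2] by simp
  ultimately have bnd: "- B \<le> (LINT x|lborel. (g x) ^ 4) + a * (LINT x|lborel. (g x) ^ 2)" by simp
  have "weight c a \<rho> \<phi> \<omega> = exp (- c * ((LINT x|lborel. (g x) ^ 4) + a * (LINT x|lborel. (g x) ^ 2)))"
    unfolding weight_def g_def by (simp add: algebra_simps)
  also have "\<dots> \<le> exp (c * B)"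
    using mult_left_mono[OF bnd c] by (simp add: algebra_simps)
  finally show "0 < weight c a \<rho> \<phi> \<omega> \<and> weight c a \<rho> \<phi> \<omega> \<le> exp (c * B)"
    by (simp add: weight_def)
qed

theorem theorem5p2:
  fixes \<Lambda> a R :: real and \<rho> :: "pt \<Rightarrow> real"
    and M :: "'w measure" and \<phi> :: "'w \<Rightarrow> pt \<Rightarrow> real"
  assumes "\<Lambda> > 0"
    and "smooth_fun \<rho>" and "compact_support \<rho>"
    and "R > 0" and "\<forall>x\<in>ball 0 R. \<rho> x = 1"
    and "gaussian_field M \<phi> (cov_kernel \<Lambda>)"
  shows "\<exists>c0 > 0. \<forall>c. 0 < c \<and> c < c0 \<longrightarrow>
           (\<exists>f. square_integrable f \<and> closure {x. f x \<noteq> 0} \<subseteq> {x. x $ 1 > 0} \<and>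
              (let E = (LINT \<omega>|nu M c a \<rho> \<phi>.
                          cnj (smeared \<rho> \<phi> (f \<circ> Theta) \<omega>) * smeared \<rho> \<phi> f \<omega>)
               in Im E = 0 \<and> Re E < 0))"
proof -
  note L = assms(1) and sm = assms(2) and cs = assms(3) and R = assms(4) and r1 = assms(5)
    and gf = assms(6)
  interpret P: prob_space M using gf unfolding gaussian_field_def by (elim conjE)
  have rc: "continuous_on UNIV \<rho>" by (rule rho_cont[OF sm])
  define s where "s = min (R / 8) (1 / (8 * \<Lambda>))"
  have s0: "s > 0" using L R by (simp add: s_def)
  have s8: "8 * s * \<Lambda> \<le> 1"
  proof -
    have "s \<le> 1 / (8 * \<Lambda>)" by (simp add: s_def)
    then have "s * (8 * \<Lambda>) \<le> 1" using L by (simp add: le_divide_eq)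
    then show ?thesis by (simp add: mult_ac)
  qed
  have sR: "8 * s \<le> R" by (simp add: s_def)
  define qa :: pt where "qa = (- (2 * s)) *\<^sub>R e1"
  define qb :: pt where "qb = (- (4 * s)) *\<^sub>R e1"
  define pa :: pt where "pa = (2 * s) *\<^sub>R e1"
  define pb :: pt where "pb = (4 * s) *\<^sub>R e1"
  define T where "T = (\<lambda>r \<omega>. LINT u|lborel. indicator (ball 0 s) u * \<phi> \<omega> (r + u))"
  define X where "X = (\<lambda>\<omega>. (T qa \<omega> - T qb \<omega>) * (T pa \<omega> - T pb \<omega>))"
  have Xi: "integrable M X" and Xneg: "integral\<^sup>L M X < 0"
    using E0_neg[OF gf L s0 s8] unfolding X_def T_def qa_def qb_def pa_def pb_def by auto
  have Xm: "X \<in> borel_measurable M" using Xi by (rule borel_measurable_integrable)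
  have nrm: "norm (k *\<^sub>R e1) = \<bar>k\<bar>" for k by simp
  have rho1: "\<rho> x = 1" if "norm p \<le> 4 * s" "x \<in> ball p s" for p x
  proof -
    have "norm x \<le> norm p + norm (x - p)" using norm_triangle_ineq[of p "x - p"] by simp
    also have "norm (x - p) < s" using that(2) by (simp add: dist_norm norm_minus_commute)
    finally have "norm x < 5 * s" using that(1) by simp
    then have "norm x < R" using sR s0 by simp
    then show ?thesis using r1 by simp
  qed
  have smeq: "(LINT x|lborel. complex_of_real (indicator (ball p1 s) x - indicator (ball p2 s) x) * complex_of_real (\<rho> x * \<phi> \<omega> x))
      = complex_of_real (T p1 \<omega> - T p2 \<omega>)"
    if p: "norm p1 \<le> 4 * s" "norm p2 \<le> 4 * s" and \<omega>: "\<omega> \<in> space M" for p1 p2 \<omega>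
  proof -
    have pc: "continuous_on UNIV (\<phi> \<omega>)" by (rule gf_cont[OF gf \<omega>])
    have gc: "continuous_on UNIV (\<lambda>x. \<rho> x * \<phi> \<omega> x)" by (rule continuous_on_mult[OF rc pc])
    have "(LINT x|lborel. complex_of_real (indicator (ball p1 s) x - indicator (ball p2 s) x) * complex_of_real (\<rho> x * \<phi> \<omega> x))
        = (LINT x|lborel. complex_of_real (indicator (ball p1 s) x * (\<rho> x * \<phi> \<omega> x) - indicator (ball p2 s) x * (\<rho> x * \<phi> \<omega> x)))"
      by (intro Bochner_Integration.integral_cong refl) (simp add: algebra_simps)
    also have "\<dots> = complex_of_real (LINT x|lborel. indicator (ball p1 s) x * (\<rho> x * \<phi> \<omega> x) - indicator (ball p2 s) x * (\<rho> x * \<phi> \<omega> x))"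
      by (rule integral_complex_of_real)
    also have "(LINT x|lborel. indicator (ball p1 s) x * (\<rho> x * \<phi> \<omega> x) - indicator (ball p2 s) x * (\<rho> x * \<phi> \<omega> x))
       = (LINT x|lborel. indicator (ball p1 s) x * (\<rho> x * \<phi> \<omega> x)) - (LINT x|lborel. indicator (ball p2 s) x * (\<rho> x * \<phi> \<omega> x))"
      by (rule Bochner_Integration.integral_diff[OF ball_integrable[OF gc] ball_integrable[OF gc]])
    also have "(LINT x|lborel. indicator (ball p1 s) x * (\<rho> x * \<phi> \<omega> x)) = T p1 \<omega>"
      unfolding T_def by (rule T_eq[OF pc]) (rule rho1[OF p(1)])
    also have "(LINT x|lborel. indicator (ball p2 s) x * (\<rho> x * \<phi> \<omega> x)) = T p2 \<omega>"
      unfolding T_def by (rule T_eq[OF pc]) (rule rho1[OF p(2)])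
    finally show ?thesis .
  qed
  define fr where "fr = (\<lambda>x. indicator (ball pa s) x - indicator (ball pb s) x :: real)"
  define f where "f = (\<lambda>x. complex_of_real (fr x))"
  have npa: "norm pa \<le> 4 * s" "norm pb \<le> 4 * s" "norm qa \<le> 4 * s" "norm qb \<le> 4 * s"
    using s0 by (simp_all add: pa_def pb_def qa_def qb_def)
  have Tpa: "Theta pa = qa" "Theta pb = qb" by (simp_all add: pa_def pb_def qa_def qb_def Theta_e1)
  have ind_Theta: "indicator (ball p s) (Theta x) = (indicator (ball (Theta p) s) x :: real)" for p x
    by (simp add: indicator_def dist_Theta)
  have sf: "smeared \<rho> \<phi> f \<omega> = complex_of_real (T pa \<omega> - T pb \<omega>)" if "\<omega> \<in> space M" for \<omega>
    unfolding smeared_def f_def fr_def using smeq[OF npa(1,2) that] .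
  have sg: "smeared \<rho> \<phi> (f \<circ> Theta) \<omega> = complex_of_real (T qa \<omega> - T qb \<omega>)" if "\<omega> \<in> space M" for \<omega>
    unfolding smeared_def f_def fr_def o_def ind_Theta Tpa using smeq[OF npa(3,4) that] .
  define h where "h = (\<lambda>\<omega>. cnj (smeared \<rho> \<phi> (f \<circ> Theta) \<omega>) * smeared \<rho> \<phi> f \<omega>)"
  have hX: "h \<omega> = complex_of_real (X \<omega>)" if "\<omega> \<in> space M" for \<omega>
    unfolding h_def sf[OF that] sg[OF that] X_def by simp
  have hm: "h \<in> borel_measurable M"
  proof -
    have "(\<lambda>\<omega>. complex_of_real (X \<omega>)) \<in> borel_measurable M" using Xm by measurable
    then show ?thesis using measurable_cong[of M h "\<lambda>\<omega>. complex_of_real (X \<omega>)"] hX by blast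
  qed
  define B where "B = a\<^sup>2 / 4 * measure lborel (closure {x. \<rho> x \<noteq> 0})"
  note WP = weight_props[OF gf rc cs, where a = a, folded B_def]
  have B0: "B \<ge> 0" by (rule WP(3))
  define N where "N = (\<lambda>c. LINT \<omega>|M. weight c a \<rho> \<phi> \<omega> * X \<omega>)"
  have Eform: "(LINT \<omega>|nu M c a \<rho> \<phi>. h \<omega>) = complex_of_real (N c / (LINT \<omega>|M. weight c a \<rho> \<phi> \<omega>))"
    and Zpos: "(LINT \<omega>|M. weight c a \<rho> \<phi> \<omega>) > 0" if c: "c \<ge> 0" for c
  proof -
    let ?W = "weight c a \<rho> \<phi>"
    have Wm: "?W \<in> borel_measurable M" by (rule WP(1))
    have Wb: "\<And>\<omega>. \<omega> \<in> space M \<Longrightarrow> 0 < ?W \<omega> \<and> ?W \<omega> \<le> exp (c * B)" by (rule WP(2)[OF c])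
    have Wi: "integrable M ?W"
    proof (rule Bochner_Integration.integrable_bound[OF P.integrable_const[of "exp (c * B)"] Wm])
      show "AE \<omega> in M. norm (?W \<omega>) \<le> norm (exp (c * B))"
        using Wb by (intro AE_I2) (auto simp: less_imp_le)
    qed
    show Zp: "(LINT \<omega>|M. ?W \<omega>) > 0"
    proof -
      have "integral\<^sup>L M (\<lambda>\<omega>. - ?W \<omega>) < 0"
      proof (rule integral_neg_strict[of M _ "space M"])
        show "integrable M (\<lambda>\<omega>. - ?W \<omega>)" using Wi by simp
        show "\<And>\<omega>. \<omega> \<in> space M \<Longrightarrow> - ?W \<omega> \<le> 0" using Wb by (auto simp: less_imp_le)
        show "space M \<in> sets M" by simp
        show "emeasure M (space M) \<noteq> 0" by (simp add: P.emeasure_space_1)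
        show "\<And>\<omega>. \<omega> \<in> space M \<Longrightarrow> - ?W \<omega> < 0" using Wb by auto
      qed
      then show ?thesis by simp
    qed
    define Z where "Z = (LINT \<omega>|M. ?W \<omega>)"
    have "(LINT \<omega>|nu M c a \<rho> \<phi>. h \<omega>) = (LINT \<omega>|M. (?W \<omega> / Z) *\<^sub>R h \<omega>)"
      unfolding nu_def Z_def[symmetric]
      by (rule integral_density[OF hm]) (use Wm Wb Zp in \<open>auto simp: Z_def intro!: AE_I2 divide_nonneg_pos less_imp_le\<close>)
    also have "\<dots> = (LINT \<omega>|M. complex_of_real (?W \<omega> * X \<omega> / Z))"
      by (intro Bochner_Integration.integral_cong refl) (simp add: hX scaleR_conv_of_real)
    also have "\<dots> = complex_of_real (N c / Z)" by (simp only: integral_complex_of_real integral_divide_zero N_def)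
    finally show "(LINT \<omega>|nu M c a \<rho> \<phi>. h \<omega>) = complex_of_real (N c / (LINT \<omega>|M. ?W \<omega>))"
      by (simp add: Z_def)
  qed
  have lim: "((\<lambda>t. N (inverse t)) \<longlongrightarrow> integral\<^sup>L M X) at_top"
    unfolding N_def
  proof (rule integral_dominated_convergence_at_top[where w = "\<lambda>\<omega>. exp B * \<bar>X \<omega>\<bar>"])
    show "X \<in> borel_measurable M" by (rule Xm)
    show "(\<lambda>\<omega>. weight (inverse t) a \<rho> \<phi> \<omega> * X \<omega>) \<in> borel_measurable M" for t :: real
    proof -
      have "(\<lambda>\<omega>. weight (inverse t) a \<rho> \<phi> \<omega>) \<in> borel_measurable M"
        by (rule WP(1))
      then show ?thesis using Xm by (rule borel_measurable_times)
    qed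
    show "integrable M (\<lambda>\<omega>. exp B * \<bar>X \<omega>\<bar>)" using Xi by auto
    show "AE \<omega> in M. ((\<lambda>t. weight (inverse t) a \<rho> \<phi> \<omega> * X \<omega>) \<longlongrightarrow> X \<omega>) at_top"
    proof (intro AE_I2)
      fix \<omega>
      have i0: "((\<lambda>t::real. inverse t) \<longlongrightarrow> 0) at_top"
        by (rule tendsto_inverse_0_at_top[OF filterlim_ident])
      have "((\<lambda>t. weight (inverse t) a \<rho> \<phi> \<omega>) \<longlongrightarrow> exp (- 0 * (LINT x|lborel. (\<rho> x * \<phi> \<omega> x) ^ 4)
                              - 0 * a * (LINT x|lborel. (\<rho> x * \<phi> \<omega> x) ^ 2))) at_top"
        unfolding weight_def by (intro tendsto_intros i0)
      then have "((\<lambda>t. weight (inverse t) a \<rho> \<phi> \<omega>) \<longlongrightarrow> 1) at_top" by simp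
      from tendsto_mult[OF this tendsto_const[of "X \<omega>"]]
      show "((\<lambda>t. weight (inverse t) a \<rho> \<phi> \<omega> * X \<omega>) \<longlongrightarrow> X \<omega>) at_top" by simp
    qed
    show "\<forall>\<^sub>F t in at_top. AE \<omega> in M. norm (weight (inverse t) a \<rho> \<phi> \<omega> * X \<omega>) \<le> exp B * \<bar>X \<omega>\<bar>"
      unfolding eventually_at_top_linorder
    proof (intro exI[of _ 1] allI impI AE_I2)
      fix t :: real and \<omega> assume t: "1 \<le> t" and \<omega>: "\<omega> \<in> space M"
      have it: "0 \<le> inverse t" "inverse t \<le> 1" using t by (auto simp: inverse_le_1_iff)
      have w: "0 < weight (inverse t) a \<rho> \<phi> \<omega> \<and> weight (inverse t) a \<rho> \<phi> \<omega> \<le> exp (inverse t * B)"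
        by (rule WP(2)[OF it(1) \<omega>])
      have e: "exp (inverse t * B) \<le> exp B" using it B0 by (simp add: mult_left_le_one_le)
      have "weight (inverse t) a \<rho> \<phi> \<omega> \<le> exp B" using order_trans[OF conjunct2[OF w] e] .
      then have "\<bar>weight (inverse t) a \<rho> \<phi> \<omega>\<bar> \<le> exp B" using w by (simp add: abs_of_pos)
      then show "norm (weight (inverse t) a \<rho> \<phi> \<omega> * X \<omega>) \<le> exp B * \<bar>X \<omega>\<bar>"
        by (simp add: abs_mult mult_right_mono)
    qed
  qed
  have "\<forall>\<^sub>F t in at_top. N (inverse t) < 0" by (rule order_tendstoD(2)[OF lim Xneg])
  then obtain T0 where T0: "\<And>t. t \<ge> T0 \<Longrightarrow> N (inverse t) < 0"
    unfolding eventually_at_top_linorder by blast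
  define c0 where "c0 = inverse (max T0 1)"
  have c0: "c0 > 0" by (simp add: c0_def)
  have sqf: "square_integrable f"
  proof -
    have frm: "fr \<in> borel_measurable lborel" unfolding fr_def
      by (intro borel_measurable_diff borel_measurable_indicator) auto
    have fm: "f \<in> borel_measurable lborel" unfolding f_def using frm by measurable
    have ii: "integrable lborel (\<lambda>x. indicator (ball pa s) x + indicator (ball pb s) x :: real)"
      using emeasure_lborel_ball_finite[of pa s] emeasure_lborel_ball_finite[of pb s]
      by (intro Bochner_Integration.integrable_add integrable_real_indicator) auto
    have "integrable lborel (\<lambda>x. (cmod (f x))\<^sup>2)"
    proof (rule Bochner_Integration.integrable_bound[OF ii])
      show "(\<lambda>x. (cmod (f x))\<^sup>2) \<in> borel_measurable lborel" using fm by measurable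
      show "AE x in lborel. norm ((cmod (f x))\<^sup>2) \<le> norm (indicator (ball pa s) x + indicator (ball pb s) x :: real)"
        by (intro AE_I2) (auto simp: f_def fr_def indicator_def)
    qed
    then show ?thesis unfolding square_integrable_def using fm by blast
  qed
  have supp: "closure {x. f x \<noteq> 0} \<subseteq> {x. x $ 1 > 0}"
  proof -
    have pos: "x $ 1 > 0" if "x \<in> cball (k *\<^sub>R e1) s" "k \<ge> 2 * s" for x k
    proof -
      have "\<bar>(x - k *\<^sub>R e1) $ 1\<bar> \<le> norm (x - k *\<^sub>R e1)" by (rule component_le_norm_cart)
      also have "\<dots> \<le> s" using that(1) by (simp add: dist_norm norm_minus_commute)
      finally have "\<bar>x $ 1 - k\<bar> \<le> s" by simp
      then show ?thesis using that(2) s0 by linarith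
    qed
    have "{x. f x \<noteq> 0} \<subseteq> cball pa s \<union> cball pb s"
      by (auto simp: f_def fr_def indicator_def)
    then have "closure {x. f x \<noteq> 0} \<subseteq> cball pa s \<union> cball pb s"
      by (rule closure_minimal) auto
    also have "\<dots> \<subseteq> {x. x $ 1 > 0}"
      using pos[of _ "2 * s"] pos[of _ "4 * s"] s0 by (auto simp: pa_def pb_def)
    finally show ?thesis .
  qed
  show ?thesis
  proof (intro exI[of _ c0] conjI c0 allI impI)
    fix c assume c: "0 < c \<and> c < c0"
    have "max T0 1 < inverse c"
    proof -
      have "inverse c0 < inverse c" using c by (intro less_imp_inverse_less) auto
      then show ?thesis by (simp add: c0_def)
    qed
    then have Nc: "N c < 0" using T0[of "inverse c"] by simp
    have Zc: "(LINT \<omega>|M. weight c a \<rho> \<phi> \<omega>) > 0" using Zpos c by simp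
    have E: "(LINT \<omega>|nu M c a \<rho> \<phi>. cnj (smeared \<rho> \<phi> (f \<circ> Theta) \<omega>) * smeared \<rho> \<phi> f \<omega>)
        = complex_of_real (N c / (LINT \<omega>|M. weight c a \<rho> \<phi> \<omega>))"
      using Eform[of c] c unfolding h_def by simp
    show "\<exists>f. square_integrable f \<and> closure {x. f x \<noteq> 0} \<subseteq> {x. x $ 1 > 0} \<and>
              (let E = (LINT \<omega>|nu M c a \<rho> \<phi>.
                          cnj (smeared \<rho> \<phi> (f \<circ> Theta) \<omega>) * smeared \<rho> \<phi> f \<omega>)
               in Im E = 0 \<and> Re E < 0)"
    proof (intro exI[of _ f] conjI sqf supp)
      show "let E = (LINT \<omega>|nu M c a \<rho> \<phi>.
                          cnj (smeared \<rho> \<phi> (f \<circ> Theta) \<omega>) * smeared \<rho> \<phi> f \<omega>)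
               in Im E = 0 \<and> Re E < 0"
        unfolding Let_def E using Nc Zc by (simp add: divide_neg_pos)
    qed
  qed
qed

end
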